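(* Let $(S,K,I)$ be an active split graph such that $\Phi=\Phi(S)$ is simple and connected. Then exactly one of the following holds: (1) $\Phi$ is complete and $|K|=|I|$; (2) $|K|=\omega(\Phi)<|I|$, and every vertex of $\Phi$ belongs to some maximum clique of $\Phi$; in particular $|K|\le 1+\min\{\deg_{\Phi}(v): v\in I\}$.
   Context: All graphs are finite and simple. A split graph is a graph $S$ whose vertex set is a disjoint union $V(S)=K\,\dot\cup\,I$ with $K$ a clique and $I$ an independent set; $(K,I)$ is called a bipartition of $S$, and $(S,K,I)$ denotes $S$ together with this fixed bipartition. A 2-switch in a graph $G$ is performed on four distinct vertices $a,b,c,d$ with $ab,cd\in E(G)$ and $ac,bd\notin E(G)$: it deletes $ab,cd$ and adds $ac,bd$; $a,b,c,d$ are said to participate in it. A vertex is active in $G$ if it participates in some 2-switch on $G$; $G$ is active if all its vertices are active. For a split graph $(S,K,I)$ and distinct $u,v\in I$, $\sigma_{uv}(S)$ is the number of induced subgraphs of $S$ isomorphic to $P_4$ containing both $u$ and $v$. The factor graph $\Phi(S)$ is the loopless multigraph with vertex set $I$ having exactly $\sigma_{uv}(S)$ parallel edges between $u$ and $v$; it is simple if $\sigma_{uv}(S)\in\{0,1\}$ for all $u,v$. Graph notions (connected, complete, clique, clique number $\omega(\Phi)$, degree $\deg_\Phi$, etc.) applied to $\Phi(S)$ refer to its underlying simple graph, in which $u\sim v$ iff $\sigma_{uv}(S)\ge1$. *)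

theory Defs
  imports Main
begin

definition simple_graph :: "'a set \<Rightarrow> ('a \<Rightarrow> 'a \<Rightarrow> bool) \<Rightarrow> bool" where
  "simple_graph V E \<longleftrightarrow> finite V \<and> (\<forall>x y. E x y \<longrightarrow> x \<in> V \<and> y \<in> V)
     \<and> (\<forall>x y. E x y \<longrightarrow> E y x) \<and> (\<forall>x. \<not> E x x)"

definition split_graph :: "'a set \<Rightarrow> ('a \<Rightarrow> 'a \<Rightarrow> bool) \<Rightarrow> 'a set \<Rightarrow> 'a set \<Rightarrow> bool" where
  "split_graph V E K I \<longleftrightarrow> simple_graph V E \<and> K \<inter> I = {} \<and> K \<union> I = V
     \<and> (\<forall>x\<in>K. \<forall>y\<in>K. x \<noteq> y \<longrightarrow> E x y) \<and> (\<forall>x\<in>I. \<forall>y\<in>I. \<not> E x y)"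

definition two_switch :: "('a \<Rightarrow> 'a \<Rightarrow> bool) \<Rightarrow> 'a \<Rightarrow> 'a \<Rightarrow> 'a \<Rightarrow> 'a \<Rightarrow> bool" where
  "two_switch E a b c d \<longleftrightarrow> distinct [a, b, c, d] \<and> E a b \<and> E c d \<and> \<not> E a c \<and> \<not> E b d"

definition active_vertex :: "('a \<Rightarrow> 'a \<Rightarrow> bool) \<Rightarrow> 'a \<Rightarrow> bool" where
  "active_vertex E v \<longleftrightarrow> (\<exists>a b c d. two_switch E a b c d \<and> v \<in> {a, b, c, d})"

definition active_graph :: "'a set \<Rightarrow> ('a \<Rightarrow> 'a \<Rightarrow> bool) \<Rightarrow> bool" where
  "active_graph V E \<longleftrightarrow> (\<forall>v\<in>V. active_vertex E v)"

definition induced_P4 :: "'a set \<Rightarrow> ('a \<Rightarrow> 'a \<Rightarrow> bool) \<Rightarrow> 'a set \<Rightarrow> bool" where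
  "induced_P4 V E X \<longleftrightarrow> X \<subseteq> V \<and> (\<exists>a b c d. X = {a, b, c, d} \<and> distinct [a, b, c, d]
     \<and> E a b \<and> E b c \<and> E c d \<and> \<not> E a c \<and> \<not> E b d \<and> \<not> E a d)"

definition sigma :: "'a set \<Rightarrow> ('a \<Rightarrow> 'a \<Rightarrow> bool) \<Rightarrow> 'a \<Rightarrow> 'a \<Rightarrow> nat" where
  "sigma V E u v = card {X. induced_P4 V E X \<and> u \<in> X \<and> v \<in> X}"

text \<open>Underlying simple graph of the factor graph Phi(S) on vertex set I.\<close>
definition phi_adj :: "'a set \<Rightarrow> ('a \<Rightarrow> 'a \<Rightarrow> bool) \<Rightarrow> 'a set \<Rightarrow> 'a \<Rightarrow> 'a \<Rightarrow> bool" where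
  "phi_adj V E I u v \<longleftrightarrow> u \<in> I \<and> v \<in> I \<and> u \<noteq> v \<and> sigma V E u v \<ge> 1"

definition phi_simple :: "'a set \<Rightarrow> ('a \<Rightarrow> 'a \<Rightarrow> bool) \<Rightarrow> 'a set \<Rightarrow> bool" where
  "phi_simple V E I \<longleftrightarrow> (\<forall>u\<in>I. \<forall>v\<in>I. u \<noteq> v \<longrightarrow> sigma V E u v \<in> {0, 1})"

definition phi_connected :: "'a set \<Rightarrow> ('a \<Rightarrow> 'a \<Rightarrow> bool) \<Rightarrow> 'a set \<Rightarrow> bool" where
  "phi_connected V E I \<longleftrightarrow> (\<forall>u\<in>I. \<forall>v\<in>I. (phi_adj V E I)\<^sup>*\<^sup>* u v)"

definition phi_complete :: "'a set \<Rightarrow> ('a \<Rightarrow> 'a \<Rightarrow> bool) \<Rightarrow> 'a set \<Rightarrow> bool" where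
  "phi_complete V E I \<longleftrightarrow> (\<forall>u\<in>I. \<forall>v\<in>I. u \<noteq> v \<longrightarrow> phi_adj V E I u v)"

definition phi_clique :: "'a set \<Rightarrow> ('a \<Rightarrow> 'a \<Rightarrow> bool) \<Rightarrow> 'a set \<Rightarrow> 'a set \<Rightarrow> bool" where
  "phi_clique V E I C \<longleftrightarrow> C \<subseteq> I \<and> (\<forall>u\<in>C. \<forall>v\<in>C. u \<noteq> v \<longrightarrow> phi_adj V E I u v)"

definition phi_omega :: "'a set \<Rightarrow> ('a \<Rightarrow> 'a \<Rightarrow> bool) \<Rightarrow> 'a set \<Rightarrow> nat" where
  "phi_omega V E I = Max (card ` {C. phi_clique V E I C})"

definition phi_max_clique :: "'a set \<Rightarrow> ('a \<Rightarrow> 'a \<Rightarrow> bool) \<Rightarrow> 'a set \<Rightarrow> 'a set \<Rightarrow> bool" where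
  "phi_max_clique V E I C \<longleftrightarrow> phi_clique V E I C \<and> card C = phi_omega V E I"

definition phi_deg :: "'a set \<Rightarrow> ('a \<Rightarrow> 'a \<Rightarrow> bool) \<Rightarrow> 'a set \<Rightarrow> 'a \<Rightarrow> nat" where
  "phi_deg V E I v = card {w. phi_adj V E I v w}"

end

theory Submission
  imports Defs
begin

lemma d1: "S - T = {x} \<Longrightarrow> z \<in> S \<Longrightarrow> z \<notin> T \<Longrightarrow> z = x" by blast
lemma d2: "S - T = {x} \<Longrightarrow> x \<in> S" by blast
lemma d3: "S - T = {x} \<Longrightarrow> x \<notin> T" by blast

lemma case2:
  assumes sw: "\<forall>S\<in>F. \<forall>T\<in>F. S \<noteq> T \<longrightarrow> (\<exists>x y. S - T = {x} \<and> T - S = {y})"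
    and A: "A \<in> F" and B: "B \<in> F" and ab: "A - B = {a}" "B - A = {b}"
    and T: "T \<in> F" and c: "c \<in> A" "c \<in> B" "c \<notin> T"
  shows "\<forall>S\<in>F. S \<subseteq> insert b A"
proof -
  have TA: "T \<noteq> A" "T \<noteq> B" using c by auto
  obtain x1 y1 where t1: "A - T = {x1}" "T - A = {y1}" using sw A T TA by metis
  obtain x2 y2 where t2: "B - T = {x2}" "T - B = {y2}" using sw B T TA by metis
  have x1: "x1 = c" using d1[OF t1(1) c(1) c(3)] by simp
  have x2: "x2 = c" using d1[OF t2(1) c(2) c(3)] by simp
  have aA: "a \<in> A" "a \<notin> B" using d2[OF ab(1)] d3[OF ab(1)] .
  have bB: "b \<in> B" "b \<notin> A" using d2[OF ab(2)] d3[OF ab(2)] .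
  have "a \<in> T"
  proof (rule ccontr)
    assume "a \<notin> T" then have "a = c" using d1[OF t1(1) aA(1)] x1 by simp
    then show False using aA c by simp
  qed
  have "b \<in> T"
  proof (rule ccontr)
    assume "b \<notin> T" then have "b = c" using d1[OF t2(1) bB(1)] x2 by simp
    then show False using bB c by simp
  qed
  have y1: "y1 = b" using d1[OF t1(2) \<open>b \<in> T\<close> bB(2)] by simp
  have TD: "T \<subseteq> insert b A"
  proof
    fix z assume "z \<in> T" then show "z \<in> insert b A" using d1[OF t1(2) \<open>z \<in> T\<close>] y1 by blast
  qed
  have BD: "B \<subseteq> insert b A"
  proof
    fix z assume "z \<in> B" then show "z \<in> insert b A" using d1[OF ab(2) \<open>z \<in> B\<close>] by blast
  qed
  show ?thesis
  proof
    fix S assume S: "S \<in> F"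
    show "S \<subseteq> insert b A"
    proof (rule ccontr)
      assume "\<not> S \<subseteq> insert b A"
      then obtain s where s: "s \<in> S" "s \<notin> insert b A" by blast
      have sn: "s \<notin> A" "s \<notin> B" "s \<notin> T" using s TD BD by auto
      have ne: "S \<noteq> A" "S \<noteq> B" "S \<noteq> T" using s sn by auto
      obtain p1 q1 where r1: "S - A = {p1}" "A - S = {q1}" using sw S A ne by metis
      obtain p2 q2 where r2: "S - B = {p2}" "B - S = {q2}" using sw S B ne by metis
      obtain p3 q3 where r3: "S - T = {p3}" "T - S = {q3}" using sw S T ne by metis
      have p2: "p2 = s" using d1[OF r2(1) s(1) sn(2)] by simp
      have p3: "p3 = s" using d1[OF r3(1) s(1) sn(3)] by simp
      have "a \<notin> S"
      proof
        assume "a \<in> S" then have "a = s" using d1[OF r2(1) _ aA(2)] p2 by simp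
        then show False using aA(1) sn(1) by simp
      qed
      have q1: "q1 = a" using d1[OF r1(2) aA(1) \<open>a \<notin> S\<close>] by simp
      have "c \<in> S"
      proof (rule ccontr)
        assume "c \<notin> S" then have "c = a" using d1[OF r1(2) c(1)] q1 by simp
        then show False using aA c by simp
      qed
      then have "c = s" using d1[OF r3(1) _ c(3)] p3 by simp
      then show False using c(1) sn(1) by simp
    qed
  qed
qed

lemma each:
  assumes sw: "\<forall>S\<in>F. \<forall>T\<in>F. S \<noteq> T \<longrightarrow> (\<exists>x y. S - T = {x} \<and> T - S = {y})"
    and A: "A \<in> F" and bA: "b \<notin> A" and allD: "\<forall>S\<in>F. S \<subseteq> insert b A" and S: "S \<in> F"
  shows "\<exists>x\<in>insert b A. S = insert b A - {x}"
proof (cases "S = A")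
  case True
  then have "S = insert b A - {b}" using bA by simp
  then show ?thesis by blast
next
  case False
  obtain x y where xy: "A - S = {x}" "S - A = {y}" using sw S A False by metis
  have "y \<in> insert b A" using d2[OF xy(2)] allD S by blast
  then have y: "y = b" using d3[OF xy(2)] by simp
  have "S = insert b A - {x}"
  proof
    show "S \<subseteq> insert b A - {x}" using allD S d3[OF xy(1)] by blast
    show "insert b A - {x} \<subseteq> S"
    proof
      fix z assume z: "z \<in> insert b A - {x}"
      show "z \<in> S"
      proof (cases "z = b")
        case True then show ?thesis using d2[OF xy(2)] y by simp
      next
        case False
        then have "z \<in> A" "z \<noteq> x" using z by auto
        then show ?thesis using d1[OF xy(1)] by blast
      qed
    qed
  qed
  moreover have "x \<in> insert b A" using d2[OF xy(1)] by simp
  ultimately show ?thesis by blast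
qed

lemma case1:
  assumes sw: "\<forall>S\<in>F. \<forall>T\<in>F. S \<noteq> T \<longrightarrow> (\<exists>x y. S - T = {x} \<and> T - S = {y})"
    and A: "A \<in> F" and Aa: "A = {a}" and S: "S \<in> F"
  shows "\<exists>y. S = {y}"
proof (cases "S = A")
  case True then show ?thesis using Aa by blast
next
  case False
  then obtain x y where xy: "S - A = {x}" "A - S = {y}" using sw S A by metis
  have "y = a" using d2[OF xy(2)] Aa by simp
  then have "a \<notin> S" using d3[OF xy(2)] by simp
  have "S = {x}"
  proof
    show "{x} \<subseteq> S" using d2[OF xy(1)] by simp
    show "S \<subseteq> {x}"
    proof
      fix z assume "z \<in> S"
      then have "z \<notin> A" using \<open>a \<notin> S\<close> Aa by auto
      then show "z \<in> {x}" using d1[OF xy(1) \<open>z \<in> S\<close>] by simp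
    qed
  qed
  then show ?thesis by blast
qed


lemma comb:
  fixes K :: "'a set" and F :: "'a set set"
  assumes fin: "finite K" and sub: "\<forall>S\<in>F. S \<subseteq> K"
    and sw: "\<forall>S\<in>F. \<forall>T\<in>F. S \<noteq> T \<longrightarrow> (\<exists>x y. S - T = {x} \<and> T - S = {y})"
    and cov: "\<forall>k\<in>K. \<exists>S\<in>F. k \<in> S" and miss: "\<forall>k\<in>K. \<exists>S\<in>F. k \<notin> S"
    and ne: "K \<noteq> {}"
  shows "card F = card K"
proof -
  obtain k where k: "k \<in> K" using ne by blast
  obtain A where A: "A \<in> F" "k \<in> A" using cov k by blast
  obtain B where B: "B \<in> F" "k \<notin> B" using miss k by blast
  have AB: "A \<noteq> B" using A B by blast
  obtain a b where ab: "A - B = {a}" "B - A = {b}" using sw A B AB by metis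
  show ?thesis
  proof (cases "\<forall>S\<in>F. A \<inter> B \<subseteq> S")
    case True
    have "A \<inter> B = {}"
    proof (rule ccontr)
      assume "A \<inter> B \<noteq> {}"
      then obtain c where c: "c \<in> A \<inter> B" by blast
      then have "c \<in> K" using A(1) sub by blast
      then obtain S where "S \<in> F" "c \<notin> S" using miss by blast
      then have "A \<inter> B \<subseteq> S" using True by blast
      then show False using c \<open>c \<notin> S\<close> by blast
    qed
    have "A = (A - B) \<union> (A \<inter> B)" by blast
    then have Aa: "A = {a}" using ab(1) \<open>A \<inter> B = {}\<close> by simp
    have sing: "\<exists>y. S = {y}" if S: "S \<in> F" for S
      using case1[OF sw A(1) Aa S] .
    have "F = (\<lambda>k. {k}) ` K"
    proof
      show "F \<subseteq> (\<lambda>k. {k}) ` K"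
      proof
        fix S assume S: "S \<in> F"
        then obtain y where y: "S = {y}" using sing by blast
        then have "y \<in> K" using sub S by auto
        then show "S \<in> (\<lambda>k. {k}) ` K" using y by (intro image_eqI[of _ _ y]) auto
      qed
    next
      show "(\<lambda>k. {k}) ` K \<subseteq> F"
      proof
        fix S assume "S \<in> (\<lambda>k. {k}) ` K"
        then obtain k where k: "k \<in> K" "S = {k}" by auto
        then obtain S' where S': "S' \<in> F" "k \<in> S'" using cov by blast
        then obtain y where "S' = {y}" using sing by blast
        then have "S' = S" using k S' by simp
        then show "S \<in> F" using S' by simp
      qed
    qed
    moreover have "inj_on (\<lambda>k. {k}) K" by (simp add: inj_on_def)
    ultimately show ?thesis by (simp add: card_image)
  next
    case False
    then obtain T c where T: "T \<in> F" and c: "c \<in> A" "c \<in> B" "c \<notin> T" by blast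
    have allD: "\<forall>S\<in>F. S \<subseteq> insert b A" using case2[OF sw A(1) B(1) ab T c] .
    have bA: "b \<notin> A" using d3[OF ab(2)] .
    have KD: "K = insert b A"
    proof
      show "K \<subseteq> insert b A" using cov allD by blast
      show "insert b A \<subseteq> K" using sub A(1) B(1) d2[OF ab(2)] by blast
    qed
    have ea: "\<exists>x\<in>K. S = K - {x}" if S: "S \<in> F" for S
      using each[OF sw A(1) bA allD S] KD by simp
    have "F = (\<lambda>k. K - {k}) ` K"
    proof
      show "F \<subseteq> (\<lambda>k. K - {k}) ` K" using ea by blast
    next
      show "(\<lambda>k. K - {k}) ` K \<subseteq> F"
      proof
        fix S assume "S \<in> (\<lambda>k. K - {k}) ` K"
        then obtain k where k: "k \<in> K" "S = K - {k}" by blast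
        then obtain S' where S': "S' \<in> F" "k \<notin> S'" using miss by blast
        then obtain x where x: "x \<in> K" "S' = K - {x}" using ea by blast
        then have "x = k" using k S' by blast
        then show "S \<in> F" using k S' x by simp
      qed
    qed
    moreover have "inj_on (\<lambda>k. K - {k}) K" by (auto simp add: inj_on_def)
    ultimately show ?thesis by (simp add: card_image)
  qed
qed

lemma transversal:
  fixes N :: "'a \<Rightarrow> 'b"
  assumes v: "v \<in> I"
  shows "\<exists>C. C \<subseteq> I \<and> inj_on N C \<and> N ` C = N ` I \<and> v \<in> C"
proof -
  define g where "g S = (if S = N v then v else inv_into I N S)" for S
  have gI: "g S \<in> I \<and> N (g S) = S" if S: "S \<in> N ` I" for S
  proof (cases "S = N v")
    case True then show ?thesis using v unfolding g_def by simp
  next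
    case False
    then have "g S = inv_into I N S" unfolding g_def by simp
    then show ?thesis using inv_into_into[OF S] f_inv_into_f[OF S] by simp
  qed
  define C where "C = g ` (N ` I)"
  have "C \<subseteq> I"
  proof
    fix x assume "x \<in> C"
    then obtain S where S: "S \<in> N ` I" "x = g S" unfolding C_def by (rule imageE)
    show "x \<in> I" using gI[OF S(1)] S(2) by simp
  qed
  moreover have "inj_on N C"
  proof (rule inj_onI)
    fix x y assume "x \<in> C" "y \<in> C" and e: "N x = N y"
    obtain S where S: "S \<in> N ` I" "x = g S" using \<open>x \<in> C\<close> unfolding C_def by (rule imageE)
    obtain T where T: "T \<in> N ` I" "y = g T" using \<open>y \<in> C\<close> unfolding C_def by (rule imageE)
    have "S = T" using gI[OF S(1)] gI[OF T(1)] S(2) T(2) e by simp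
    then show "x = y" using S(2) T(2) by simp
  qed
  moreover have "N ` C = N ` I"
  proof
    show "N ` C \<subseteq> N ` I" using \<open>C \<subseteq> I\<close> by (rule image_mono)
    show "N ` I \<subseteq> N ` C"
    proof
      fix S assume S: "S \<in> N ` I"
      have "S = N (g S)" using gI[OF S] by simp
      moreover have "g S \<in> C" unfolding C_def using S by (rule imageI)
      ultimately show "S \<in> N ` C" by (rule image_eqI)
    qed
  qed
  moreover have "v \<in> C"
  proof -
    have "v = g (N v)" unfolding g_def by simp
    moreover have "N v \<in> N ` I" using v by (rule imageI)
    ultimately show ?thesis unfolding C_def by (rule image_eqI)
  qed
  ultimately show ?thesis by blast
qed

locale sg = fixes V :: "'a set" and E K I assumes spl: "split_graph V E K I"
begin

definition N where "N u = {k\<in>K. E u k}"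

lemma fV: "finite V" and dis: "K \<inter> I = {}" and un: "K \<union> I = V"
  and eV: "E x y \<Longrightarrow> x \<in> V \<and> y \<in> V" and sy: "E x y \<Longrightarrow> E y x" and irr: "\<not> E x x"
  and cl: "x \<in> K \<Longrightarrow> y \<in> K \<Longrightarrow> x \<noteq> y \<Longrightarrow> E x y"
  and ind: "x \<in> I \<Longrightarrow> y \<in> I \<Longrightarrow> \<not> E x y"
  using spl unfolding split_graph_def simple_graph_def by blast+

lemma fK: "finite K" and fI: "finite I" using fV un by auto

lemma P4_mk:
  assumes "u \<in> I" "v \<in> I" "k1 \<in> N u" "k1 \<notin> N v" "k2 \<in> N v" "k2 \<notin> N u"
  shows "induced_P4 V E {u,k1,k2,v}"
proof -
  have K: "k1 \<in> K" "k2 \<in> K" using assms N_def by auto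
  have d: "distinct [u,k1,k2,v]" using assms K dis N_def by auto
  have "E u k1" "E k1 k2" "E k2 v" "\<not> E u k2" "\<not> E k1 v" "\<not> E u v"
    using assms K cl d ind sy N_def by auto
  moreover have "{u,k1,k2,v} \<subseteq> V" using assms K un by auto
  ultimately show ?thesis unfolding induced_P4_def using d by blast
qed

lemma P4_struct:
  assumes P: "induced_P4 V E X" and uv: "u \<in> X" "v \<in> X" "u \<in> I" "v \<in> I" "u \<noteq> v"
  shows "\<exists>k1 k2. k1 \<in> N u - N v \<and> k2 \<in> N v - N u"
proof -
  obtain a b c d where X: "X = {a,b,c,d}" "distinct [a,b,c,d]"
     "E a b" "E b c" "E c d" "\<not> E a c" "\<not> E b d" "\<not> E a d" "X \<subseteq> V"
    using P unfolding induced_P4_def by blast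
  have m: "x \<in> K \<or> x \<in> I" if "x \<in> X" for x using that X un by blast
  have "a \<in> I"
  proof (rule ccontr)
    assume "a \<notin> I" then have "a \<in> K" using m X by blast
    then have "c \<in> I" "d \<in> I" using m X cl by auto
    then show False using X ind by blast
  qed
  have "d \<in> I"
  proof (rule ccontr)
    assume "d \<notin> I" then have "d \<in> K" using m X by blast
    then have "b \<in> I" "a \<in> I" using m X cl by auto
    then show False using X ind by blast
  qed
  have "b \<in> K" "c \<in> K" using \<open>a \<in> I\<close> \<open>d \<in> I\<close> X m ind by blast+
  then have "b \<notin> I" "c \<notin> I" using dis by blast+
  then have "(u = a \<and> v = d) \<or> (u = d \<and> v = a)" using uv X by blast
  moreover have "b \<in> N a - N d" "c \<in> N d - N a"
    using X \<open>b \<in> K\<close> \<open>c \<in> K\<close> sy N_def by auto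
  ultimately show ?thesis by blast
qed

lemma P4V: "induced_P4 V E X \<Longrightarrow> X \<subseteq> V" unfolding induced_P4_def by (rule conjunct1)

lemma sfin: "finite {X. induced_P4 V E X \<and> u \<in> X \<and> v \<in> X}"
proof (rule finite_subset[of _ "Pow V"])
  show "{X. induced_P4 V E X \<and> u \<in> X \<and> v \<in> X} \<subseteq> Pow V" using P4V by blast
  show "finite (Pow V)" using fV by simp
qed

lemma adj_iff:
  assumes "u \<in> I" "v \<in> I"
  shows "phi_adj V E I u v \<longleftrightarrow> u \<noteq> v \<and> (\<exists>k1 k2. k1 \<in> N u - N v \<and> k2 \<in> N v - N u)"
proof -
  have "sigma V E u v \<ge> 1 \<longleftrightarrow> {X. induced_P4 V E X \<and> u \<in> X \<and> v \<in> X} \<noteq> {}"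
    unfolding sigma_def using sfin[of u v] card_gt_0_iff[of "{X. induced_P4 V E X \<and> u \<in> X \<and> v \<in> X}"]
    by linarith
  moreover have "u \<noteq> v \<Longrightarrow> {X. induced_P4 V E X \<and> u \<in> X \<and> v \<in> X} \<noteq> {}
     \<longleftrightarrow> (\<exists>k1 k2. k1 \<in> N u - N v \<and> k2 \<in> N v - N u)"
  proof
    assume "u \<noteq> v" "{X. induced_P4 V E X \<and> u \<in> X \<and> v \<in> X} \<noteq> {}"
    then show "\<exists>k1 k2. k1 \<in> N u - N v \<and> k2 \<in> N v - N u" using P4_struct assms by blast
  next
    assume "\<exists>k1 k2. k1 \<in> N u - N v \<and> k2 \<in> N v - N u"
    then obtain k1 k2 where "k1 \<in> N u - N v" "k2 \<in> N v - N u" by blast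
    then have "{u,k1,k2,v} \<in> {X. induced_P4 V E X \<and> u \<in> X \<and> v \<in> X}"
      using P4_mk assms by auto
    then show "{X. induced_P4 V E X \<and> u \<in> X \<and> v \<in> X} \<noteq> {}" by blast
  qed
  ultimately show ?thesis unfolding phi_adj_def using assms by blast
qed

lemma uniq:
  assumes simp: "phi_simple V E I" and uv: "u \<in> I" "v \<in> I"
    and k: "k1 \<in> N u - N v" "k1' \<in> N u - N v" "k2 \<in> N v - N u"
  shows "k1 = k1'"
proof (rule ccontr)
  assume ne: "k1 \<noteq> k1'"
  let ?S = "{X. induced_P4 V E X \<and> u \<in> X \<and> v \<in> X}"
  have uvne: "u \<noteq> v" using k by blast
  have "{u,k1,k2,v} \<in> ?S" "{u,k1',k2,v} \<in> ?S" using P4_mk uv k by auto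
  moreover have "k1' \<in> K" using k N_def by auto
  then have "k1' \<notin> {u,k1,k2,v}" using ne k uv dis by auto
  then have "{u,k1,k2,v} \<noteq> {u,k1',k2,v}" by blast
  ultimately have "card {{u,k1,k2,v}, {u,k1',k2,v}} \<le> card ?S"
    by (intro card_mono sfin) auto
  then have "2 \<le> sigma V E u v" unfolding sigma_def
    using \<open>{u,k1,k2,v} \<noteq> {u,k1',k2,v}\<close> by simp
  moreover have "sigma V E u v \<in> {0,1}" using simp uv uvne unfolding phi_simple_def by blast
  ultimately show False by auto
qed

lemma adj_diff:
  assumes simp: "phi_simple V E I" and a: "phi_adj V E I u v"
  shows "\<exists>x y. N u - N v = {x} \<and> N v - N u = {y}"
proof -
  have uv: "u \<in> I" "v \<in> I" using a unfolding phi_adj_def by auto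
  obtain k1 k2 where k: "k1 \<in> N u - N v" "k2 \<in> N v - N u" using a adj_iff uv by blast
  have "N u - N v = {k1}" using uniq[OF simp uv _ _ k(2)] k by blast
  moreover have "N v - N u = {k2}" using uniq[OF simp uv(2,1) _ _ k(1)] k by blast
  ultimately show ?thesis by blast
qed

lemma finN: "finite (N u)" using fK N_def by auto

lemma adj_card:
  assumes simp: "phi_simple V E I" and a: "phi_adj V E I u v"
  shows "card (N u) = card (N v)"
proof -
  obtain x y where xy: "N u - N v = {x}" "N v - N u = {y}" using adj_diff[OF simp a] by blast
  have "N u = insert x (N u \<inter> N v)" "x \<notin> N u \<inter> N v" using xy by blast+
  then have "card (N u) = Suc (card (N u \<inter> N v))"
    by (metis card_insert_disjoint finN finite_Int)
  moreover have "N v = insert y (N u \<inter> N v)" "y \<notin> N u \<inter> N v" using xy by blast+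
  then have "card (N v) = Suc (card (N u \<inter> N v))"
    by (metis card_insert_disjoint finN finite_Int)
  ultimately show ?thesis by simp
qed

lemma conn_card:
  assumes simp: "phi_simple V E I" and "(phi_adj V E I)\<^sup>*\<^sup>* u v"
  shows "card (N u) = card (N v)"
  using assms(2) by (induction rule: rtranclp_induct) (auto dest: adj_card[OF simp])

lemma adj_N:
  assumes simp: "phi_simple V E I" and con: "phi_connected V E I" and uv: "u \<in> I" "v \<in> I"
  shows "phi_adj V E I u v \<longleftrightarrow> N u \<noteq> N v"
proof
  assume "phi_adj V E I u v" then show "N u \<noteq> N v" using adj_iff uv by blast
next
  assume ne: "N u \<noteq> N v"
  show "phi_adj V E I u v"
  proof (rule ccontr)
    assume "\<not> phi_adj V E I u v"
    then have "N u \<subseteq> N v \<or> N v \<subseteq> N u" using adj_iff uv ne by blast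
    moreover have "card (N u) = card (N v)" using conn_card[OF simp] con uv
      unfolding phi_connected_def by blast
    ultimately show False using ne finN by (metis card_subset_eq)
  qed
qed

lemma switch_K:
  assumes sw: "two_switch E a b c d" and k: "k \<in> {a,b,c,d}" "k \<in> K"
  shows "(\<exists>u\<in>I. k \<in> N u) \<and> (\<exists>v\<in>I. k \<notin> N v)"
proof -
  have s: "distinct [a,b,c,d]" "E a b" "E c d" "\<not> E a c" "\<not> E b d"
    using sw unfolding two_switch_def by auto
  have "a \<in> V" "b \<in> V" using eV[OF s(2)] by auto
  moreover have "c \<in> V" "d \<in> V" using eV[OF s(3)] by auto
  ultimately have m: "x \<in> K \<or> x \<in> I" if "x \<in> {a,b,c,d}" for x using that un by auto
  have nI: "x \<in> K \<Longrightarrow> x \<notin> I" for x using dis by blast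
  have cases: "(a \<in> I \<and> d \<in> I \<and> b \<in> K \<and> c \<in> K) \<or> (a \<in> K \<and> d \<in> K \<and> b \<in> I \<and> c \<in> I)"
  proof (cases "a \<in> I")
    case True
    have "b \<in> K \<or> b \<in> I" "c \<in> K \<or> c \<in> I" "d \<in> K \<or> d \<in> I" using m by auto
    have "b \<noteq> d" "a \<noteq> c" using s by auto
    have "b \<in> K" using True s(2) ind \<open>b \<in> K \<or> b \<in> I\<close> by blast
    have "d \<in> I" using \<open>b \<in> K\<close> \<open>b \<noteq> d\<close> s(5) cl \<open>d \<in> K \<or> d \<in> I\<close> by blast
    have "c \<in> K" using \<open>d \<in> I\<close> s(3) ind \<open>c \<in> K \<or> c \<in> I\<close> by blast
    show ?thesis using True \<open>b \<in> K\<close> \<open>c \<in> K\<close> \<open>d \<in> I\<close> by blast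
  next
    case False
    have "a \<in> K \<or> a \<in> I" "b \<in> K \<or> b \<in> I" "c \<in> K \<or> c \<in> I" "d \<in> K \<or> d \<in> I" using m by auto
    have "b \<noteq> d" "a \<noteq> c" using s by auto
    have "a \<in> K" using False \<open>a \<in> K \<or> a \<in> I\<close> by blast
    have "c \<in> I" using \<open>a \<in> K\<close> \<open>a \<noteq> c\<close> s(4) cl \<open>c \<in> K \<or> c \<in> I\<close> by blast
    have "d \<in> K" using \<open>c \<in> I\<close> s(3) ind \<open>d \<in> K \<or> d \<in> I\<close> by blast
    have "b \<in> I" using \<open>d \<in> K\<close> \<open>b \<noteq> d\<close> s(5) cl \<open>b \<in> K \<or> b \<in> I\<close> by blast
    show ?thesis using \<open>a \<in> K\<close> \<open>b \<in> I\<close> \<open>c \<in> I\<close> \<open>d \<in> K\<close> by blast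
  qed
  then show ?thesis
  proof
    assume h: "a \<in> I \<and> d \<in> I \<and> b \<in> K \<and> c \<in> K"
    then have "k = b \<or> k = c" using k nI by blast
    then show ?thesis
    proof
      assume "k = b" then show ?thesis using h s sy[of d b] sy[of a b] sy[of c d] k unfolding N_def by auto
    next
      assume "k = c" then show ?thesis using h s sy[of c a] sy[of a b] sy[of c d] k unfolding N_def by auto
    qed
  next
    assume h: "a \<in> K \<and> d \<in> K \<and> b \<in> I \<and> c \<in> I"
    then have "k = a \<or> k = d" using k nI by blast
    then show ?thesis
    proof
      assume "k = a" then show ?thesis using h s sy[of c a] sy[of a b] sy[of c d] k unfolding N_def by auto
    next
      assume "k = d" then show ?thesis using h s sy[of d b] sy[of a b] sy[of c d] k unfolding N_def by auto
    qed
  qed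
qed

lemma K_props:
  assumes act: "active_graph V E" and k: "k \<in> K"
  shows "(\<exists>u\<in>I. k \<in> N u) \<and> (\<exists>v\<in>I. k \<notin> N v)"
proof -
  have "k \<in> V" using k un by blast
  then obtain a b c d where h1: "two_switch E a b c d" and h2: "k \<in> {a,b,c,d}"
    using act unfolding active_graph_def active_vertex_def by blast
  show ?thesis by (rule switch_K[OF h1 h2 k])
qed

lemma V_empty:
  assumes act: "active_graph V E" and K: "K = {}"
  shows "V = {}"
proof (rule ccontr)
  assume "V \<noteq> {}"
  then obtain v where "v \<in> V" by blast
  then obtain a b c d where "two_switch E a b c d"
    using act unfolding active_graph_def active_vertex_def by blast
  then have "E a b" unfolding two_switch_def by blast
  then have "a \<in> V" "b \<in> V" using eV by auto
  then have "a \<in> I" "b \<in> I" using un K by auto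
  then show False using ind \<open>E a b\<close> by blast
qed

end


theorem theorem5p2:
  fixes V :: "'a set" and E :: "'a \<Rightarrow> 'a \<Rightarrow> bool" and K I :: "'a set"
  assumes "split_graph V E K I"
    and "active_graph V E"
    and "phi_simple V E I"
    and "phi_connected V E I"
  shows "let c1 = (phi_complete V E I \<and> card K = card I);
             c2 = (card K = phi_omega V E I \<and> phi_omega V E I < card I
                   \<and> (\<forall>v\<in>I. \<exists>C. phi_max_clique V E I C \<and> v \<in> C)
                   \<and> card K \<le> 1 + Min (phi_deg V E I ` I))
         in (c1 \<and> \<not> c2) \<or> (\<not> c1 \<and> c2)"
proof -
  interpret sg V E K I using assms(1) by (rule sg.intro)
  show ?thesis
  proof (cases "K = {}")
    case True
    then have "V = {}" using V_empty assms(2) by blast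
    then have "I = {}" using un by blast
    then show ?thesis using True by (simp add: Let_def phi_complete_def)
  next
    case Kne: False
    have Nadj: "phi_adj V E I u v \<longleftrightarrow> N u \<noteq> N v" if "u \<in> I" "v \<in> I" for u v
      using adj_N[OF assms(3) assms(4) that] .
    have cardF: "card (N ` I) = card K"
    proof (rule comb[OF fK])
      show "\<forall>S\<in>N ` I. S \<subseteq> K" unfolding N_def by blast
      show "\<forall>S\<in>N ` I. \<forall>T\<in>N ` I. S \<noteq> T \<longrightarrow> (\<exists>x y. S - T = {x} \<and> T - S = {y})"
      proof (intro ballI impI)
        fix S T assume "S \<in> N ` I" "T \<in> N ` I" "S \<noteq> T"
        then obtain u v where uv: "u \<in> I" "v \<in> I" "S = N u" "T = N v" by blast
        then have "phi_adj V E I u v" using Nadj[OF uv(1) uv(2)] uv(3,4) \<open>S \<noteq> T\<close> by simp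
        then show "\<exists>x y. S - T = {x} \<and> T - S = {y}" using adj_diff[OF assms(3)] uv by blast
      qed
      show "\<forall>k\<in>K. \<exists>S\<in>N ` I. k \<in> S" using K_props[OF assms(2)] by blast
      show "\<forall>k\<in>K. \<exists>S\<in>N ` I. k \<notin> S" using K_props[OF assms(2)] by blast
      show "K \<noteq> {}" by fact
    qed
    have Ine: "I \<noteq> {}" using cardF Kne fK by auto
    have compl: "phi_complete V E I \<longleftrightarrow> inj_on N I"
      unfolding phi_complete_def inj_on_def by (auto simp: Nadj)
    have injc: "inj_on N I \<longleftrightarrow> card K = card I"
      using card_image[of N I] eq_card_imp_inj_on[OF fI, of N] cardF by auto
    have KI: "card K \<le> card I" using card_image_le[OF fI, of N] cardF by simp
    have cliq: "phi_clique V E I C \<longleftrightarrow> C \<subseteq> I \<and> inj_on N C" for C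
    proof
      assume h: "phi_clique V E I C"
      then have CI: "C \<subseteq> I" unfolding phi_clique_def by blast
      have "inj_on N C"
      proof (rule inj_onI, rule ccontr)
        fix x y assume "x \<in> C" "y \<in> C" "N x = N y" "x \<noteq> y"
        then have "phi_adj V E I x y" using h unfolding phi_clique_def by blast
        then show False using Nadj[of x y] CI \<open>x \<in> C\<close> \<open>y \<in> C\<close> \<open>N x = N y\<close> by blast
      qed
      then show "C \<subseteq> I \<and> inj_on N C" using CI by blast
    next
      assume h: "C \<subseteq> I \<and> inj_on N C"
      show "phi_clique V E I C" unfolding phi_clique_def
      proof (intro conjI ballI impI)
        show "C \<subseteq> I" using h by blast
        fix u v assume "u \<in> C" "v \<in> C" "u \<noteq> v"
        then have "N u \<noteq> N v" using h by (meson inj_on_contraD)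
        then show "phi_adj V E I u v" using Nadj[of u v] h \<open>u \<in> C\<close> \<open>v \<in> C\<close> by blast
      qed
    qed
    have trans: "\<exists>C. C \<subseteq> I \<and> inj_on N C \<and> card C = card K \<and> v \<in> C" if v: "v \<in> I" for v
    proof -
      obtain C where C: "C \<subseteq> I" "inj_on N C" "N ` C = N ` I" "v \<in> C"
        using transversal[of v I N, OF v] by blast
      have "card C = card K" using card_image[OF C(2)] C(3) cardF by simp
      then show ?thesis using C by blast
    qed
    have cle: "card C \<le> card K" if "C \<subseteq> I" "inj_on N C" for C
    proof -
      have "card C = card (N ` C)" using card_image[OF that(2)] by simp
      also have "\<dots> \<le> card (N ` I)" using that fI by (intro card_mono) auto
      finally show ?thesis using cardF by simp
    qed
    have om: "phi_omega V E I = card K"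
      unfolding phi_omega_def
    proof (rule Max_eqI)
      show "finite (card ` {C. phi_clique V E I C})"
        proof (rule finite_imageI, rule finite_subset[of _ "Pow I"])
        show "{C. phi_clique V E I C} \<subseteq> Pow I" unfolding phi_clique_def by blast
        show "finite (Pow I)" using fI by simp
      qed
      show "y \<le> card K" if yin: "y \<in> card ` {C. phi_clique V E I C}" for y
      proof -
        obtain C where "y = card C" "phi_clique V E I C" using yin by blast
        then show ?thesis using cliq[of C] cle[of C] by simp
      qed
      obtain v where "v \<in> I" using Ine by blast
      then obtain C where "C \<subseteq> I" "inj_on N C" "card C = card K" using trans by blast
      then have "phi_clique V E I C" using cliq[of C] by simp
      then show "card K \<in> card ` {C. phi_clique V E I C}" using \<open>card C = card K\<close> by (intro image_eqI[of _ _ C]) auto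
    qed
    have cover: "\<forall>v\<in>I. \<exists>C. phi_max_clique V E I C \<and> v \<in> C"
    proof
      fix v assume "v \<in> I"
      then obtain C where "C \<subseteq> I" "inj_on N C" "card C = card K" "v \<in> C" using trans by blast
      then show "\<exists>C. phi_max_clique V E I C \<and> v \<in> C" unfolding phi_max_clique_def om using cliq[of C] by auto
    qed
    have deg: "card K \<le> 1 + phi_deg V E I v" if v: "v \<in> I" for v
    proof -
      obtain C where C: "C \<subseteq> I" "inj_on N C" "card C = card K" "v \<in> C" using trans v by blast
      have "C - {v} \<subseteq> {w. phi_adj V E I v w}"
      proof
        fix w assume w: "w \<in> C - {v}"
        then have "N w \<noteq> N v" using C by (metis DiffE inj_on_contraD singletonI)
        then show "w \<in> {w. phi_adj V E I v w}" using Nadj[of v w] v w C by blast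
      qed
      moreover have "finite {w. phi_adj V E I v w}"
        by (rule finite_subset[OF _ fI]) (auto simp: phi_adj_def)
      ultimately have "card (C - {v}) \<le> phi_deg V E I v" unfolding phi_deg_def
        by (rule card_mono[rotated])
      moreover have "card (C - {v}) = card K - 1" using C by simp
      ultimately show ?thesis by linarith
    qed
    have mind: "card K \<le> 1 + Min (phi_deg V E I ` I)"
    proof -
      have "Min (phi_deg V E I ` I) \<in> phi_deg V E I ` I" using fI Ine by (intro Min_in) auto
      then show ?thesis using deg by auto
    qed
    have A: "(phi_complete V E I \<and> card K = card I) \<longleftrightarrow> card K = card I" using compl injc by blast
    have B: "phi_omega V E I < card I \<longleftrightarrow> card K \<noteq> card I" using om KI by linarith
    show ?thesis
    proof (cases "card K = card I")
      case True then show ?thesis unfolding Let_def using A B by simp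
    next
      case False then show ?thesis unfolding Let_def using A B om cover mind by simp
    qed
  qed
qed

end
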